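(* Let $\alpha\in\mathbb{R}$ be transcendental over $\mathbb{Q}$ and let $\mathbb{Q}(\alpha)^+=H_1\sqcup\cdots\sqcup H_k$ ($k$ finite) be a partition into pairwise disjoint nonempty subsets, each closed under addition and multiplication. Consider the set $L$ of elements $a\alpha+b>0$ with $a,b\in\mathbb{Q}$, $a\neq 0$. Then $L$ meets at most two of the sets $H_i$; and if it meets two of them, then two elements $a\alpha+b$ and $a'\alpha+b'$ of $L$ lie in the same $H_i$ if and only if $a$ and $a'$ have the same sign. *)

theory Defs
  imports "HOL-Analysis.Analysis" "HOL-Computational_Algebra.Polynomial"
begin

definition Qadj :: "real \<Rightarrow> real set" where
  "Qadj \<alpha> = {poly p \<alpha> / poly q \<alpha> | p q.
      (\<forall>i. coeff p i \<in> \<rat>) \<and> (\<forall>i. coeff q i \<in> \<rat>) \<and> poly q \<alpha> \<noteq> 0}"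

end

theory Submission
  imports Defs
begin

lemma lin_Qadj: assumes "a \<in> \<rat>" "b \<in> \<rat>" shows "a * \<alpha> + b \<in> Qadj \<alpha>"
proof -
  have "\<forall>i. coeff [:b, a:] i \<in> \<rat>" using assms by (auto simp: coeff_pCons split: nat.split)
  moreover have "\<forall>i. coeff (1::real poly) i \<in> \<rat>" by (auto simp: coeff_1)
  moreover have "a * \<alpha> + b = poly [:b, a:] \<alpha> / poly 1 \<alpha>" by (simp add: algebra_simps)
  ultimately show ?thesis unfolding Qadj_def by fastforce
qed
lemma scale_Qadj: assumes "x \<in> Qadj \<alpha>" "c \<in> \<rat>" shows "c * x \<in> Qadj \<alpha>"
proof -
  from assms(1) obtain p q where "x = poly p \<alpha> / poly q \<alpha>" "\<forall>i. coeff p i \<in> \<rat>" "\<forall>i. coeff q i \<in> \<rat>" "poly q \<alpha> \<noteq> 0"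
    unfolding Qadj_def by blast
  then show ?thesis unfolding Qadj_def using assms(2)
    by (intro CollectI exI[of _ "smult c p"] exI[of _ q]) auto
qed


locale semipart =
  fixes H :: "nat \<Rightarrow> real set" and k :: nat and P :: "real set"
  assumes disj: "\<And>i j. i < k \<Longrightarrow> j < k \<Longrightarrow> i \<noteq> j \<Longrightarrow> H i \<inter> H j = {}"
    and cov: "(\<Union>i<k. H i) = P"
    and addc: "\<And>i x y. i < k \<Longrightarrow> x \<in> H i \<Longrightarrow> y \<in> H i \<Longrightarrow> x + y \<in> H i"
    and mulc: "\<And>i x y. i < k \<Longrightarrow> x \<in> H i \<Longrightarrow> y \<in> H i \<Longrightarrow> x * y \<in> H i"
    and Psc: "\<And>x c. x \<in> P \<Longrightarrow> c \<in> \<rat> \<Longrightarrow> c > 0 \<Longrightarrow> c * x \<in> P"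
begin

lemma same: "i < k \<Longrightarrow> j < k \<Longrightarrow> x \<in> H i \<Longrightarrow> x \<in> H j \<Longrightarrow> i = j"
  using disj by blast

lemma inP: "x \<in> P \<Longrightarrow> \<exists>i<k. x \<in> H i"
  using cov by blast

lemma natsc: "i < k \<Longrightarrow> x \<in> H i \<Longrightarrow> n \<ge> 1 \<Longrightarrow> real n * x \<in> H i"
proof (induction n)
  case 0 then show ?case by simp
next
  case (Suc n)
  show ?case
  proof (cases "n = 0")
    case True then show ?thesis using Suc by simp
  next
    case False
    then have "real n * x \<in> H i" using Suc by simp
    then have "real n * x + x \<in> H i" using addc Suc by blast
    then show ?thesis by (simp add: algebra_simps)
  qed
qed

lemma ratsc: assumes "i < k" "x \<in> H i" "c \<in> \<rat>" "c > 0" shows "c * x \<in> H i"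
proof -
  from assms(3) obtain a b where ab: "b > 0" "c = of_int a / of_int b" by (auto elim: Rats_cases')
  with assms(4) have a: "a > 0" by (simp add: zero_less_divide_iff)
  have xP: "x \<in> P" using cov assms by blast
  have "(1 / of_int b) * x \<in> P" using Psc[OF xP, of "1/of_int b"] ab by simp
  then obtain j where j: "j < k" "(1 / of_int b) * x \<in> H j" using inP by blast
  have nb: "nat b \<ge> 1" "real (nat b) = of_int b" using ab by auto
  have "real (nat b) * ((1 / of_int b) * x) \<in> H j" using natsc[OF j nb(1)] .
  moreover have "real (nat b) * ((1 / of_int b) * x) = x" using ab by simp
  ultimately have "j = i" using same[OF j(1) assms(1)] assms(2) by simp
  have "real (nat a) * ((1 / of_int b) * x) \<in> H i" using natsc[of i "(1 / of_int b) * x" "nat a"] j \<open>j = i\<close> a by simp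
  moreover have "real (nat a) * ((1 / of_int b) * x) = c * x" using ab a by simp
  ultimately show ?thesis by simp
qed

lemma lemA:
  assumes good: "\<And>s. s \<in> \<rat> \<Longrightarrow> s < \<beta> \<Longrightarrow> \<beta> - s \<in> P"
    and rats: "p1 \<in> \<rat>" "p2 \<in> \<rat>" "q \<in> \<rat>"
    and ord: "q < p1" "p2 + q \<ge> 2 * p1"
    and J: "J < k" "\<beta> - p1 \<in> H J" "\<beta> - p2 \<in> H J"
    and M: "M < k" "\<beta> - q \<in> H M"
  shows "J = M"
proof -
  define l where "l = (p2-q)^2/(p1-q)"
  define l' where "l' = (p2-q)*(p2+q-2*p1)/(p1-q)"
  have lq: "l \<in> \<rat>" "l' \<in> \<rat>" unfolding l_def l'_def using rats by auto
  have "p2 \<noteq> q" using ord by auto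
  then have lpos: "l > 0" unfolding l_def using ord by auto
  have l'nn: "l' \<ge> 0" unfolding l'_def using ord by (auto intro!: divide_nonneg_pos mult_nonneg_nonneg)
  have X: "l * (\<beta> - p1) + (\<beta> - p2) * (\<beta> - p2) \<in> H J"
    using addc[OF J(1) ratsc[OF J(1) J(2) lq(1) lpos] mulc[OF J(1) J(3) J(3)]] .
  have Y: "l' * (\<beta> - q) + (\<beta> - q) * (\<beta> - q) \<in> H M"
  proof (cases "l' = 0")
    case True then show ?thesis using mulc[OF M(1) M(2) M(2)] by simp
  next
    case False then show ?thesis using addc[OF M(1) ratsc[OF M(1) M(2) lq(2)] mulc[OF M(1) M(2) M(2)]] l'nn by simp
  qed
  have "l * (\<beta> - p1) + (\<beta> - p2) * (\<beta> - p2) = l' * (\<beta> - q) + (\<beta> - q) * (\<beta> - q)"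
    unfolding l_def l'_def using ord by (simp add: field_simps power2_eq_square)
  then show ?thesis using same[OF J(1) M(1)] X Y by simp
qed

lemma lemB:
  assumes good: "\<And>s. s \<in> \<rat> \<Longrightarrow> s < \<beta> \<Longrightarrow> \<beta> - s \<in> P"
    and rats: "p1 \<in> \<rat>" "p2 \<in> \<rat>" and ord: "p1 < p2" "p2 < \<beta>"
    and J: "J < k" "\<beta> - p1 \<in> H J" "\<beta> - p2 \<in> H J"
  shows "\<And>q. q \<in> \<rat> \<Longrightarrow> q \<le> p1 \<Longrightarrow> \<beta> - q \<in> H J"
proof -
  define d where "d = p2 - p1"
  have dpos: "d > 0" "d \<in> \<rat>" using ord rats by (auto simp: d_def)
  have main: "\<forall>q. q \<in> \<rat> \<longrightarrow> p1 - real n * d \<le> q \<longrightarrow> q \<le> p1 \<longrightarrow> \<beta> - q \<in> H J" for n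
  proof (induction n)
    case 0 then show ?case using J by auto
  next
    case (Suc n)
    show ?case
    proof (intro allI impI)
      fix q assume q: "q \<in> \<rat>" "p1 - real (Suc n) * d \<le> q" "q \<le> p1"
      show "\<beta> - q \<in> H J"
      proof (cases "p1 - real n * d \<le> q")
        case True then show ?thesis using Suc q by blast
      next
        case False
        define r where "r = p1 - real n * d"
        have rq: "r \<in> \<rat>" unfolding r_def using rats dpos by auto
        have rJ: "\<beta> - r \<in> H J" using Suc rq dpos unfolding r_def by auto
        have "q < \<beta>" using q ord by auto
        then obtain M where M: "M < k" "\<beta> - q \<in> H M" using inP good q(1) by blast
        have nd: "real n * d \<ge> 0" using dpos by simp
        have g1: "q < r" using False unfolding r_def by linarith
        have "p1 - real (Suc n) * d \<ge> 2 * r - p2" using nd unfolding r_def d_def of_nat_Suc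
          by (simp add: algebra_simps)
        then have g2: "2 * r \<le> p2 + q" using q(2) by linarith
        have "J = M" by (rule lemA[OF good rq rats(2) q(1) g1 g2 J(1) rJ J(3) M])
        then show ?thesis using M by simp
      qed
    qed
  qed
  fix q assume q: "q \<in> \<rat>" "q \<le> p1"
  obtain n where "(p1 - q) / d \<le> real n" using real_arch_simple by blast
  then have "p1 - real n * d \<le> q" using dpos by (simp add: field_simps)
  then show "\<beta> - q \<in> H J" using main q by blast
qed

lemma lemD:
  assumes good: "\<And>s. s \<in> \<rat> \<Longrightarrow> s < \<beta> \<Longrightarrow> \<beta> - s \<in> P"
    and s: "s \<in> \<rat>" "s < \<beta>"
  shows "\<exists>c<k. \<forall>q. q \<in> \<rat> \<longrightarrow> q \<le> s \<longrightarrow> \<beta> - q \<in> H c"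
proof -
  obtain r where r: "r \<in> \<rat>" "s < r" "r < \<beta>" using Rats_dense_in_real s by blast
  define y where "y i = s + (r - s) * (real i + 1) / (real k + 1)" for i :: nat
  have yq: "y i \<in> \<rat>" for i unfolding y_def using r s by auto
  have ylo: "s < y i" for i unfolding y_def using r by auto
  have yhi: "i \<le> k \<Longrightarrow> y i < \<beta>" for i
  proof -
    assume "i \<le> k"
    then have "(r - s) * (real i + 1) \<le> (r - s) * (real k + 1)" using r
      by (intro mult_left_mono) auto
    then have "(r - s) * (real i + 1) / (real k + 1) \<le> (r - s)"
      by (simp add: divide_le_eq)
    then show ?thesis unfolding y_def using r by simp
  qed
  have ymono: "i < j \<Longrightarrow> y i < y j" for i j
    unfolding y_def using r by (simp add: divide_strict_right_mono)
  have "\<forall>i\<in>{..k}. \<exists>c. c < k \<and> \<beta> - y i \<in> H c"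
    using inP good yq yhi by auto
  then obtain g where g: "\<And>i. i \<le> k \<Longrightarrow> g i < k \<and> \<beta> - y i \<in> H (g i)"
    by (metis atMost_iff)
  have "\<not> inj_on g {..k}"
  proof
    assume "inj_on g {..k}"
    moreover have "g ` {..k} \<subseteq> {..<k}" using g by auto
    ultimately have "card {..k} \<le> card {..<k}" by (intro card_inj_on_le) auto
    then show False by simp
  qed
  then obtain i j where ij: "i \<le> k" "j \<le> k" "i < j" "g i = g j"
    unfolding inj_on_def by (metis atMost_iff linorder_neqE_nat)
  have "\<forall>q. q \<in> \<rat> \<longrightarrow> q \<le> y i \<longrightarrow> \<beta> - q \<in> H (g i)"
    using lemB[OF good yq yq ymono[OF ij(3)] yhi[OF ij(2)]] g ij by metis
  then show ?thesis using g ij ylo[of i] by (meson less_le_trans order_less_imp_le order_trans)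
qed

lemma lemC:
  assumes good: "\<And>s. s \<in> \<rat> \<Longrightarrow> s < \<beta> \<Longrightarrow> \<beta> - s \<in> P"
  shows "\<exists>c<k. \<forall>s. s \<in> \<rat> \<longrightarrow> s < \<beta> \<longrightarrow> \<beta> - s \<in> H c"
proof -
  define s0 :: real where "s0 = of_int (\<lfloor>\<beta>\<rfloor> - 1)"
  have s0: "s0 \<in> \<rat>" "s0 < \<beta>" unfolding s0_def by (auto, linarith)
  obtain c0 where c0: "c0 < k" "\<forall>q. q \<in> \<rat> \<longrightarrow> q \<le> s0 \<longrightarrow> \<beta> - q \<in> H c0"
    using lemD[OF good s0] by blast
  have "\<beta> - s \<in> H c0" if s: "s \<in> \<rat>" "s < \<beta>" for s
  proof -
    have m: "max s s0 \<in> \<rat>" "max s s0 < \<beta>" using s s0 by (auto simp: max_def)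
    obtain c where c: "c < k" "\<forall>q. q \<in> \<rat> \<longrightarrow> q \<le> max s s0 \<longrightarrow> \<beta> - q \<in> H c"
      using lemD[OF good m] by blast
    have "c = c0" using same[OF c(1) c0(1), of "\<beta> - s0"] c c0 s0 by auto
    then show ?thesis using c s by auto
  qed
  then show ?thesis using c0 by blast
qed

end


theorem corollary3p2:
  fixes \<alpha> :: real and k :: nat and H :: "nat \<Rightarrow> real set"
  assumes transc: "\<not> algebraic \<alpha>"
    and nonempty: "\<And>i. i < k \<Longrightarrow> H i \<noteq> {}"
    and disjoint: "\<And>i j. i < k \<Longrightarrow> j < k \<Longrightarrow> i \<noteq> j \<Longrightarrow> H i \<inter> H j = {}"
    and cover: "(\<Union>i<k. H i) = {x \<in> Qadj \<alpha>. x > 0}"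
    and add_closed: "\<And>i x y. i < k \<Longrightarrow> x \<in> H i \<Longrightarrow> y \<in> H i \<Longrightarrow> x + y \<in> H i"
    and mult_closed: "\<And>i x y. i < k \<Longrightarrow> x \<in> H i \<Longrightarrow> y \<in> H i \<Longrightarrow> x * y \<in> H i"
  defines "L \<equiv> {x. \<exists>a b. a \<in> \<rat> \<and> b \<in> \<rat> \<and> a \<noteq> 0 \<and> x = a * \<alpha> + b \<and> x > 0}"
  shows "card {i. i < k \<and> H i \<inter> L \<noteq> {}} \<le> 2 \<and>
    (card {i. i < k \<and> H i \<inter> L \<noteq> {}} = 2 \<longrightarrow>
      (\<forall>a b a' b'. a \<in> \<rat> \<and> b \<in> \<rat> \<and> a' \<in> \<rat> \<and> b' \<in> \<rat> \<and> a \<noteq> 0 \<and> a' \<noteq> 0 \<and>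
          a * \<alpha> + b > 0 \<and> a' * \<alpha> + b' > 0 \<longrightarrow>
        ((\<exists>i<k. a * \<alpha> + b \<in> H i \<and> a' * \<alpha> + b' \<in> H i) \<longleftrightarrow> sgn a = sgn a')))"
  proof -
  define P where "P = {x \<in> Qadj \<alpha>. x > 0}"
  interpret semipart H k P
  proof
    show "\<And>i j. i < k \<Longrightarrow> j < k \<Longrightarrow> i \<noteq> j \<Longrightarrow> H i \<inter> H j = {}" by (rule disjoint)
    show "(\<Union>i<k. H i) = P" using cover P_def by simp
    show "\<And>i x y. i < k \<Longrightarrow> x \<in> H i \<Longrightarrow> y \<in> H i \<Longrightarrow> x + y \<in> H i" by (rule add_closed)
    show "\<And>i x y. i < k \<Longrightarrow> x \<in> H i \<Longrightarrow> y \<in> H i \<Longrightarrow> x * y \<in> H i" by (rule mult_closed)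
    show "\<And>x c. x \<in> P \<Longrightarrow> c \<in> \<rat> \<Longrightarrow> c > 0 \<Longrightarrow> c * x \<in> P"
      unfolding P_def using scale_Qadj by auto
  qed
  have good1: "\<alpha> - s \<in> P" if "s \<in> \<rat>" "s < \<alpha>" for s
    using lin_Qadj[of 1 "-s" \<alpha>] that unfolding P_def by auto
  have good2: "- \<alpha> - s \<in> P" if "s \<in> \<rat>" "s < - \<alpha>" for s
    using lin_Qadj[of "-1" "-s" \<alpha>] that unfolding P_def by auto
  obtain c1 where c1: "c1 < k" "\<And>s. s \<in> \<rat> \<Longrightarrow> s < \<alpha> \<Longrightarrow> \<alpha> - s \<in> H c1"
    using lemC[of \<alpha>] good1 by blast
  obtain c2 where c2: "c2 < k" "\<And>s. s \<in> \<rat> \<Longrightarrow> s < - \<alpha> \<Longrightarrow> - \<alpha> - s \<in> H c2"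
    using lemC[of "- \<alpha>"] good2 by blast
  have cls: "a * \<alpha> + b \<in> H (if a > 0 then c1 else c2)"
    if ab: "a \<in> \<rat>" "b \<in> \<rat>" "a \<noteq> 0" "a * \<alpha> + b > 0" for a b
  proof (cases "a > 0")
    case True
    have "-b < \<alpha> * a" using ab by (simp add: algebra_simps)
    then have "(-b)/a < \<alpha>" by (simp only: pos_divide_less_eq[OF True])
    moreover have "(-b)/a \<in> \<rat>" using ab by auto
    ultimately have "\<alpha> - (-b/a) \<in> H c1" using c1(2) by blast
    then have "a * (\<alpha> - (-b/a)) \<in> H c1" using ratsc[OF c1(1)] ab True by blast
    moreover have "a * (\<alpha> - (-b/a)) = a * \<alpha> + b" using True by (simp add: field_simps)
    ultimately show ?thesis using True by simp
  next
    case False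
    then have an: "a < 0" using ab by simp
    have "(- \<alpha>) * a < b" using ab by (simp add: algebra_simps)
    then have "b/a < - \<alpha>" by (simp only: neg_divide_less_eq[OF an])
    moreover have "b/a \<in> \<rat>" using ab by auto
    ultimately have "- \<alpha> - b/a \<in> H c2" using c2(2) by blast
    moreover have "-a \<in> \<rat>" "-a > 0" using ab an by auto
    ultimately have "(-a) * (- \<alpha> - b/a) \<in> H c2" using ratsc[OF c2(1)] by blast
    moreover have "(-a) * (- \<alpha> - b/a) = a * \<alpha> + b" using an by (simp add: field_simps)
    ultimately show ?thesis using False by simp
  qed
  have sub: "{i. i < k \<and> H i \<inter> L \<noteq> {}} \<subseteq> {c1, c2}"
  proof
    fix i assume "i \<in> {i. i < k \<and> H i \<inter> L \<noteq> {}}"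
    then obtain x where i: "i < k" "x \<in> H i" "x \<in> L" by blast
    then obtain a b where "a \<in> \<rat>" "b \<in> \<rat>" "a \<noteq> 0" "x = a * \<alpha> + b" "x > 0"
      unfolding L_def by blast
    then have "x \<in> H (if a > 0 then c1 else c2)" using cls by blast
    then show "i \<in> {c1, c2}" using same[OF i(1)] i c1(1) c2(1) by (cases "a > 0") auto
  qed
  have card2: "card {i. i < k \<and> H i \<inter> L \<noteq> {}} \<le> 2"
    using card_mono[OF _ sub] card_insert_le_m1 by (smt (verit) card.empty card_insert_if finite.emptyI finite.insertI insert_absorb2 le_SucI numeral_2_eq_2 one_add_one order.trans card_Suc_eq)
  show ?thesis
  proof (intro conjI impI allI)
    show "card {i. i < k \<and> H i \<inter> L \<noteq> {}} \<le> 2" by (rule card2)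
  next
    fix a b a' b'
    assume c: "card {i. i < k \<and> H i \<inter> L \<noteq> {}} = 2"
    assume h: "a \<in> \<rat> \<and> b \<in> \<rat> \<and> a' \<in> \<rat> \<and> b' \<in> \<rat> \<and> a \<noteq> 0 \<and> a' \<noteq> 0 \<and>
          a * \<alpha> + b > 0 \<and> a' * \<alpha> + b' > 0"
    have ne: "c1 \<noteq> c2"
    proof
      assume "c1 = c2"
      then have "card {i. i < k \<and> H i \<inter> L \<noteq> {}} \<le> card {c1}" using sub by (intro card_mono) auto
      then show False using c by simp
    qed
    have x1: "a * \<alpha> + b \<in> H (if a > 0 then c1 else c2)" using cls h by blast
    have x2: "a' * \<alpha> + b' \<in> H (if a' > 0 then c1 else c2)" using cls h by blast
    show "(\<exists>i<k. a * \<alpha> + b \<in> H i \<and> a' * \<alpha> + b' \<in> H i) \<longleftrightarrow> sgn a = sgn a'"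
    proof
      assume "\<exists>i<k. a * \<alpha> + b \<in> H i \<and> a' * \<alpha> + b' \<in> H i"
      then obtain i where i: "i < k" "a * \<alpha> + b \<in> H i" "a' * \<alpha> + b' \<in> H i" by blast
      have "i = (if a > 0 then c1 else c2)" using same[OF i(1) _ i(2) x1] c1(1) c2(1) by simp
      moreover have "i = (if a' > 0 then c1 else c2)" using same[OF i(1) _ i(3) x2] c1(1) c2(1) by simp
      ultimately have "(a > 0) = (a' > 0)" using ne by (auto split: if_splits)
      then show "sgn a = sgn a'" using h by (auto simp: sgn_if)
    next
      assume "sgn a = sgn a'"
      then have "(a > 0) = (a' > 0)" using h by (auto simp: sgn_if split: if_splits)
      then show "\<exists>i<k. a * \<alpha> + b \<in> H i \<and> a' * \<alpha> + b' \<in> H i"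
        using x1 x2 c1(1) c2(1) by (intro exI[of _ "if a > 0 then c1 else c2"]) auto
    qed
  qed
qed

end
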